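(* Let $(G,k)$ be an instance, let $V_{\mathrm{ld}}$ be the set of large-dense vertices, let $X$ be a feasible solution, and let $P\subseteq V_{\mathrm{ld}}$ be a vertex triple $(v_1,v_2,v_3)$ inducing $P_3$. Then $X\cap P\neq\emptyset$.
   Context: Graphs are undirected, without self-loops, possibly with multi-edges. $N(v)$ is the set of vertices adjacent to $v$; $\rho(v)$ is the number of unordered pairs $\{u_1,u_2\}\subseteq N(v)$ joined by at least one edge. A vertex $v$ is large-dense if $|N(v)|>7k$ and $\rho(v)> |N(v)|(|N(v)|-1)/4$. A triple of distinct vertices $(v_1,v_2,v_3)$ induces $P_3$ if $v_1v_2$ and $v_2v_3$ are edges (possibly multi-edges) and $v_1v_3$ is not an edge. A vertex set induces a clique if between any two distinct vertices there is exactly one edge, and a tree if it is connected and acyclic (two parallel edges form a cycle). A feasible solution is $X\subseteq V$, $|X|\le k$, with every component of $G-X$ a clique or a tree. *)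

theory Defs
  imports Main
begin

text \<open>A multigraph on a finite vertex set V is given by an edge-multiplicity function
  m: m u v is the number of edges between u and v. Undirected (symmetric), no self-loops,
  and no edges leaving V.\<close>
definition multigraph :: "'a set \<Rightarrow> ('a \<Rightarrow> 'a \<Rightarrow> nat) \<Rightarrow> bool" where
  "multigraph V m \<longleftrightarrow> finite V \<and> (\<forall>u v. m u v = m v u) \<and> (\<forall>v. m v v = 0)
     \<and> (\<forall>u v. 0 < m u v \<longrightarrow> u \<in> V \<and> v \<in> V)"

definition nbhd :: "'a set \<Rightarrow> ('a \<Rightarrow> 'a \<Rightarrow> nat) \<Rightarrow> 'a \<Rightarrow> 'a set" where
  "nbhd V m v = {u \<in> V. 0 < m v u}"

definition rho :: "'a set \<Rightarrow> ('a \<Rightarrow> 'a \<Rightarrow> nat) \<Rightarrow> 'a \<Rightarrow> nat" where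
  "rho V m v = card {{u1, u2} | u1 u2. u1 \<in> nbhd V m v \<and> u2 \<in> nbhd V m v \<and> u1 \<noteq> u2 \<and> 0 < m u1 u2}"

text \<open>Large-dense: |N(v)| > 7k and rho(v) > |N(v)|(|N(v)|-1)/4 (multiplied by 4 to stay in nat).\<close>
definition large_dense :: "'a set \<Rightarrow> ('a \<Rightarrow> 'a \<Rightarrow> nat) \<Rightarrow> nat \<Rightarrow> 'a \<Rightarrow> bool" where
  "large_dense V m k v \<longleftrightarrow> v \<in> V \<and> card (nbhd V m v) > 7 * k
     \<and> 4 * rho V m v > card (nbhd V m v) * (card (nbhd V m v) - 1)"

definition adj_in :: "('a \<Rightarrow> 'a \<Rightarrow> nat) \<Rightarrow> 'a set \<Rightarrow> 'a \<Rightarrow> 'a \<Rightarrow> bool" where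
  "adj_in m S u v \<longleftrightarrow> u \<in> S \<and> v \<in> S \<and> 0 < m u v"

definition connected_in :: "('a \<Rightarrow> 'a \<Rightarrow> nat) \<Rightarrow> 'a set \<Rightarrow> bool" where
  "connected_in m S \<longleftrightarrow> (\<forall>u\<in>S. \<forall>v\<in>S. (adj_in m S)\<^sup>*\<^sup>* u v)"

definition components_in :: "('a \<Rightarrow> 'a \<Rightarrow> nat) \<Rightarrow> 'a set \<Rightarrow> 'a set set" where
  "components_in m S = {{u. (adj_in m S)\<^sup>*\<^sup>* v u} | v. v \<in> S}"

definition is_clique :: "('a \<Rightarrow> 'a \<Rightarrow> nat) \<Rightarrow> 'a set \<Rightarrow> bool" where
  "is_clique m C \<longleftrightarrow> (\<forall>u\<in>C. \<forall>v\<in>C. u \<noteq> v \<longrightarrow> m u v = 1)"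

text \<open>A cycle in G[C]: either two parallel edges (a 2-cycle), or a closed walk through
  at least 3 distinct vertices.\<close>
definition has_cycle :: "('a \<Rightarrow> 'a \<Rightarrow> nat) \<Rightarrow> 'a set \<Rightarrow> bool" where
  "has_cycle m C \<longleftrightarrow>
     (\<exists>u\<in>C. \<exists>v\<in>C. 2 \<le> m u v)
   \<or> (\<exists>cs. distinct cs \<and> 3 \<le> length cs \<and> set cs \<subseteq> C
         \<and> (\<forall>i < length cs. 0 < m (cs ! i) (cs ! ((i + 1) mod length cs))))"

definition is_tree :: "('a \<Rightarrow> 'a \<Rightarrow> nat) \<Rightarrow> 'a set \<Rightarrow> bool" where
  "is_tree m C \<longleftrightarrow> connected_in m C \<and> \<not> has_cycle m C"

definition feasible :: "'a set \<Rightarrow> ('a \<Rightarrow> 'a \<Rightarrow> nat) \<Rightarrow> nat \<Rightarrow> 'a set \<Rightarrow> bool" where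
  "feasible V m k X \<longleftrightarrow> X \<subseteq> V \<and> card X \<le> k
     \<and> (\<forall>C \<in> components_in m (V - X). is_clique m C \<or> is_tree m C)"

definition induces_P3 :: "('a \<Rightarrow> 'a \<Rightarrow> nat) \<Rightarrow> 'a \<Rightarrow> 'a \<Rightarrow> 'a \<Rightarrow> bool" where
  "induces_P3 m v1 v2 v3 \<longleftrightarrow> v1 \<noteq> v2 \<and> v2 \<noteq> v3 \<and> v1 \<noteq> v3
     \<and> 0 < m v1 v2 \<and> 0 < m v2 v3 \<and> m v1 v3 = 0"

end

theory Submission
  imports Defs
begin

theorem mainTheorem11:
  fixes V :: "'a set" and m :: "'a \<Rightarrow> 'a \<Rightarrow> nat" and k :: nat
    and X :: "'a set" and v1 v2 v3 :: 'a
  assumes "multigraph V m"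
    and "feasible V m k X"
    and "{v1, v2, v3} \<subseteq> {v \<in> V. large_dense V m k v}"
    and "induces_P3 m v1 v2 v3"
  shows "X \<inter> {v1, v2, v3} \<noteq> {}"
proof
  assume disj: "X \<inter> {v1, v2, v3} = {}"
  have mg: "finite V" "\<And>u v. m u v = m v u" "\<And>v. m v v = 0"
    "\<And>u v. 0 < m u v \<Longrightarrow> u \<in> V \<and> v \<in> V"
    using assms(1) unfolding multigraph_def by auto
  have fe: "X \<subseteq> V" "card X \<le> k"
    "\<And>C. C \<in> components_in m (V - X) \<Longrightarrow> is_clique m C \<or> is_tree m C"
    using assms(2) unfolding feasible_def by auto
  have finX: "finite X" using fe(1) mg(1) finite_subset by blast
  have p3: "v1 \<noteq> v2" "v2 \<noteq> v3" "v1 \<noteq> v3" "0 < m v1 v2" "0 < m v2 v3" "m v1 v3 = 0"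
    using assms(4) unfolding induces_P3_def by auto
  define N where "N = nbhd V m v2"
  define d where "d = card N"
  define P where "P = {{u1, u2} | u1 u2. u1 \<in> N \<and> u2 \<in> N \<and> u1 \<noteq> u2 \<and> 0 < m u1 u2}"
  have ld: "d > 7 * k" "4 * card P > d * (d - 1)"
    using assms(3) unfolding large_dense_def rho_def N_def d_def P_def by auto
  have finN: "finite N" using mg(1) unfolding N_def nbhd_def by auto
  have finP: "finite P"
  proof -
    have "P \<subseteq> Pow N" unfolding P_def by auto
    thus ?thesis using finN finite_subset by blast
  qed
  define Q where "Q = {e \<in> P. e \<inter> X \<noteq> {}}"
  have "Q \<subseteq> (\<lambda>(x,u). {x,u}) ` ((X \<inter> N) \<times> N)"
  proof
    fix e assume "e \<in> Q"
    then obtain u1 u2 where e: "e = {u1,u2}" "u1 \<in> N" "u2 \<in> N" "e \<inter> X \<noteq> {}"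
      unfolding Q_def P_def by auto
    show "e \<in> (\<lambda>(x,u). {x,u}) ` ((X \<inter> N) \<times> N)"
    proof (cases "u1 \<in> X")
      case True
      then show ?thesis using e by (auto intro!: image_eqI[where x="(u1,u2)"])
    next
      case False
      then have "u2 \<in> X" using e by auto
      then show ?thesis using e by (auto intro!: image_eqI[where x="(u2,u1)"])
    qed
  qed
  hence "card Q \<le> card ((X \<inter> N) \<times> N)"
  proof -
    have f: "finite ((X \<inter> N) \<times> N)" using finN finX by auto
    have "card Q \<le> card ((\<lambda>(x,u). {x,u}) ` ((X \<inter> N) \<times> N))"
      by (rule card_mono) (use f \<open>Q \<subseteq> _\<close> in auto)
    also have "\<dots> \<le> card ((X \<inter> N) \<times> N)" by (rule card_image_le[OF f])
    finally show ?thesis .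
  qed
  also have "\<dots> = card (X \<inter> N) * d" using d_def by (simp add: card_cartesian_product)
  also have "\<dots> \<le> k * d"
  proof -
    have "card (X \<inter> N) \<le> card X" using finX by (simp add: card_mono)
    thus ?thesis using fe(2) by simp
  qed
  finally have cQ: "card Q \<le> k * d" .
  have "4 * (k * d) \<le> d * (d - 1)"
  proof -
    have "4 * k \<le> d - 1" using ld(1) by linarith
    hence "d * (4 * k) \<le> d * (d - 1)" by (rule mult_left_mono) simp
    thus ?thesis by (simp add: algebra_simps)
  qed
  hence "card Q < card P" using ld(2) cQ by linarith
  hence "\<not> P \<subseteq> Q"
  proof -
    have "Q \<subseteq> P" unfolding Q_def by auto
    hence "finite Q" using finP finite_subset by blast
    thus ?thesis using \<open>card Q < card P\<close> card_mono[of Q P] by auto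
  qed
  then obtain e where "e \<in> P" "e \<notin> Q" by blast
  then obtain u1 u2 where u: "u1 \<in> N" "u2 \<in> N" "u1 \<noteq> u2" "0 < m u1 u2" "u1 \<notin> X" "u2 \<notin> X"
    unfolding P_def Q_def by auto
  have uN: "0 < m v2 u1" "0 < m v2 u2" "u1 \<in> V" "u2 \<in> V"
    using u unfolding N_def nbhd_def by auto
  have vV: "v1 \<in> V" "v2 \<in> V" "v3 \<in> V" using assms(3) by auto
  let ?S = "V - X"
  define C where "C = {u. (adj_in m ?S)\<^sup>*\<^sup>* v2 u}"
  have v2S: "v2 \<in> ?S" using vV disj by auto
  have CC: "C \<in> components_in m ?S" unfolding components_in_def C_def using v2S by blast
  have adj: "\<And>a b. a \<in> ?S \<Longrightarrow> b \<in> ?S \<Longrightarrow> 0 < m a b \<Longrightarrow> adj_in m ?S a b"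
    unfolding adj_in_def by auto
  have v1C: "v1 \<in> C" unfolding C_def
    using adj[of v2 v1] v2S vV disj p3 mg(2)[of v1 v2] by auto
  have v3C: "v3 \<in> C" unfolding C_def
    using adj[of v2 v3] v2S vV disj p3 by auto
  have v2C: "v2 \<in> C" unfolding C_def by auto
  have u1C: "u1 \<in> C" unfolding C_def
    using adj[of v2 u1] v2S uN u by auto
  have u2C: "u2 \<in> C" unfolding C_def
    using adj[of v2 u2] v2S uN u by auto
  have nc: "\<not> is_clique m C" unfolding is_clique_def using v1C v3C p3 by fastforce
  have v2u: "v2 \<noteq> u1" "v2 \<noteq> u2" using uN mg(3) by auto
  have "has_cycle m C"
    unfolding has_cycle_def
  proof (intro disjI2 exI[where x="[v2,u1,u2]"] conjI)
    show "\<forall>i<length [v2, u1, u2]. 0 < m ([v2, u1, u2] ! i) ([v2, u1, u2] ! ((i + 1) mod length [v2, u1, u2]))"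
    proof (intro allI impI)
      fix i assume "i < length [v2, u1, u2]"
      hence "i = 0 \<or> i = 1 \<or> i = 2" by auto
      thus "0 < m ([v2, u1, u2] ! i) ([v2, u1, u2] ! ((i + 1) mod length [v2, u1, u2]))"
        using uN u mg(2)[of u2 v2] by auto
    qed
  qed (use v2u u v2C u1C u2C in auto)
  hence "\<not> is_tree m C" unfolding is_tree_def by auto
  thus False using fe(3)[OF CC] nc by auto
qed

end
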